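(* Let $X$ be any normed space. Then the rendezvous set $\mathcal{R}(X)$ is nonempty.
   Context: For a normed space $X$ let $S_X=\{x:\|x\|=1\}$ be its unit sphere and use the kernel $k(x,y)=\|x-y\|$. For $n\in\mathbb{N}$, $R_n(S_X):=\bigcap_{w_1,\dots,w_n\in S_X}\overline{\mathrm{conv}}\{\frac1n\sum_{j=1}^n \|x-w_j\|: x\in S_X\}$ (closed convex hull in $\mathbb{R}$, i.e. a closed interval), and $\mathcal{R}(X):=R(S_X):=\bigcap_{n=1}^\infty R_n(S_X)$. *)

theory Defs
  imports "HOL-Analysis.Analysis"
begin

definition unit_sphere :: "'a::real_normed_vector set" where
  "unit_sphere = {x. norm x = 1}"

definition rendezvous_n :: "nat \<Rightarrow> 'a::real_normed_vector itself \<Rightarrow> real set" where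
  "rendezvous_n n _ = (\<Inter>w \<in> {w :: nat \<Rightarrow> 'a. \<forall>j\<in>{1..n}. w j \<in> unit_sphere}.
      closure (convex hull {(1 / real n) * (\<Sum>j=1..n. norm (x - w j)) | x. x \<in> (unit_sphere :: 'a set)}))"

definition rendezvous_set :: "'a::real_normed_vector itself \<Rightarrow> real set" where
  "rendezvous_set T = (\<Inter>n \<in> {1..}. rendezvous_n n T)"

end

theory Submission
  imports Defs
begin

definition fw :: "nat \<Rightarrow> (nat \<Rightarrow> 'a::real_normed_vector) \<Rightarrow> 'a \<Rightarrow> real" where
  "fw n w x = (1 / real n) * (\<Sum>j=1..n. norm (x - w j))"

definition Vw :: "nat \<Rightarrow> (nat \<Rightarrow> 'a::real_normed_vector) \<Rightarrow> real set" where
  "Vw n w = {(1 / real n) * (\<Sum>j=1..n. norm (x - w j)) | x. x \<in> (unit_sphere :: 'a set)}"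

lemma Vw_alt: "Vw n w = fw n w ` unit_sphere"
  unfolding Vw_def fw_def by auto

lemma fw_bounds:
  assumes "n \<ge> 1" "\<forall>j\<in>{1..n}. w j \<in> unit_sphere" "x \<in> unit_sphere"
  shows "0 \<le> fw n w x" "fw n w x \<le> 2"
proof -
  show "0 \<le> fw n w x" unfolding fw_def by (simp add: sum_nonneg)
  have "(\<Sum>j=1..n. norm (x - w j)) \<le> (\<Sum>j=1..n. 2)"
  proof (rule sum_mono)
    fix j assume "j \<in> {1..n}"
    then have "norm (w j) = 1" "norm x = 1" using assms unfolding unit_sphere_def by auto
    then show "norm (x - w j) \<le> 2" using norm_triangle_ineq4[of x "w j"] by simp
  qed
  then have "(\<Sum>j=1..n. norm (x - w j)) \<le> 2 * real n" by simp
  then show "fw n w x \<le> 2" unfolding fw_def using assms(1)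
    by (simp add: field_simps)
qed

lemma swap_avg:
  "(\<Sum>k=1..m. fw n w (v k)) * real n = (\<Sum>j=1..n. fw m v (w j)) * real m"
  if "n \<ge> 1" "m \<ge> 1"
proof -
  have "(\<Sum>k=1..m. fw n w (v k)) * real n = (\<Sum>k=1..m. \<Sum>j=1..n. norm (v k - w j))"
    using that unfolding fw_def by (simp add: sum_distrib_left sum_distrib_right)
  also have "\<dots> = (\<Sum>j=1..n. \<Sum>k=1..m. norm (w j - v k))"
    by (subst sum.swap) (simp add: norm_minus_commute)
  also have "\<dots> = (\<Sum>j=1..n. fw m v (w j)) * real m"
    using that unfolding fw_def by (simp add: sum_distrib_left sum_distrib_right)
  finally show ?thesis .
qed

lemma key:
  fixes w v :: "nat \<Rightarrow> 'a::real_normed_vector"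
  assumes n: "n \<ge> 1" and m: "m \<ge> 1"
    and w: "\<forall>j\<in>{1..n}. w j \<in> unit_sphere" and v: "\<forall>j\<in>{1..m}. v j \<in> unit_sphere"
  shows "Inf (Vw n w) \<le> Sup (Vw m v)"
proof -
  have ne: "(unit_sphere :: 'a set) \<noteq> {}" using v m by auto
  have bb1: "bdd_below (Vw n w)" unfolding Vw_alt bdd_below_def
    using fw_bounds(1)[OF n w] by blast
  have ba2: "bdd_above (Vw m v)" unfolding Vw_alt bdd_above_def
    using fw_bounds(2)[OF m v] by blast
  have "(\<Sum>k=1..m. Inf (Vw n w)) \<le> (\<Sum>k=1..m. fw n w (v k))"
    apply (rule sum_mono)
    apply (rule cInf_lower[OF _ bb1])
    using v unfolding Vw_alt by auto
  then have A: "real m * Inf (Vw n w) \<le> (\<Sum>k=1..m. fw n w (v k))" by simp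
  have "(\<Sum>j=1..n. fw m v (w j)) \<le> (\<Sum>j=1..n. Sup (Vw m v))"
    apply (rule sum_mono)
    apply (rule cSup_upper[OF _ ba2])
    using w unfolding Vw_alt by auto
  then have B: "(\<Sum>j=1..n. fw m v (w j)) \<le> real n * Sup (Vw m v)" by simp
  have "real m * Inf (Vw n w) * real n \<le> (\<Sum>k=1..m. fw n w (v k)) * real n"
    using A n by (simp add: mult_right_mono)
  also have "\<dots> = (\<Sum>j=1..n. fw m v (w j)) * real m" using swap_avg n m by blast
  also have "\<dots> \<le> real n * Sup (Vw m v) * real m" using B m by (simp add: mult_right_mono)
  finally have "(real m * real n) * Inf (Vw n w) \<le> (real m * real n) * Sup (Vw m v)"
    by (simp add: algebra_simps)
  moreover have "real m * real n > 0" using n m by simp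
  ultimately show ?thesis using mult_le_cancel_left_pos by blast
qed

lemma interval_in_cch:
  fixes V :: "real set"
  assumes "V \<noteq> {}" "bdd_below V" "bdd_above V" "Inf V \<le> r" "r \<le> Sup V"
  shows "r \<in> closure (convex hull V)"
proof -
  have c: "convex (closure (convex hull V))" by (simp add: convex_closure)
  have "closure V \<subseteq> closure (convex hull V)" by (simp add: closure_mono hull_subset)
  moreover have "Inf V \<in> closure V" using assms closure_contains_Inf by blast
  moreover have "Sup V \<in> closure V" using assms closure_contains_Sup by blast
  ultimately have "closed_segment (Inf V) (Sup V) \<subseteq> closure (convex hull V)"
    using c convex_contains_segment by blast
  moreover have "r \<in> closed_segment (Inf V) (Sup V)"
    using assms by (simp add: closed_segment_eq_real_ivl)
  ultimately show ?thesis by blast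
qed

theorem corollary2p3:
  shows "rendezvous_set TYPE('a::real_normed_vector) \<noteq> {}"
proof (cases "(unit_sphere :: 'a set) = {}")
  case True
  have "rendezvous_n n TYPE('a) = UNIV" if "n \<ge> 1" for n
    unfolding rendezvous_n_def using True that by auto
  then have "rendezvous_set TYPE('a) = UNIV" unfolding rendezvous_set_def by auto
  then show ?thesis by simp
next
  case False
  then obtain e :: 'a where e: "e \<in> unit_sphere" by blast
  define I where "I = {Inf (Vw n w) | n (w :: nat \<Rightarrow> 'a). n \<ge> 1 \<and> (\<forall>j\<in>{1..n}. w j \<in> unit_sphere)}"
  define r where "r = Sup I"
  have "Inf (Vw 1 (\<lambda>_. e)) \<in> I" unfolding I_def using e by auto
  then have Ine: "I \<noteq> {}" by blast
  have Ibd: "bdd_above I"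
  proof -
    have "t \<le> 2" if "t \<in> I" for t
    proof -
      obtain n and w :: "nat \<Rightarrow> 'a" where t: "t = Inf (Vw n w)" and n: "n \<ge> 1"
        and w: "\<forall>j\<in>{1..n}. w j \<in> unit_sphere" using \<open>t \<in> I\<close> unfolding I_def by blast
      have bb1: "bdd_below (Vw n w)" unfolding Vw_alt bdd_below_def
        using fw_bounds(1)[OF n w] by blast
      have "t \<le> fw n w e" unfolding t
        by (rule cInf_lower[OF _ bb1]) (use e in \<open>simp add: Vw_alt\<close>)
      also have "\<dots> \<le> 2" using fw_bounds(2)[OF n w e] .
      finally show ?thesis .
    qed
    then show ?thesis unfolding bdd_above_def by blast
  qed
  have "r \<in> rendezvous_n m TYPE('a)" if m: "m \<ge> 1" for m
    unfolding rendezvous_n_def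
  proof (rule INT_I)
    fix v :: "nat \<Rightarrow> 'a" assume "v \<in> {w. \<forall>j\<in>{1..m}. w j \<in> unit_sphere}"
    then have v: "\<forall>j\<in>{1..m}. v j \<in> unit_sphere" by simp
    have Vne: "Vw m v \<noteq> {}" using e unfolding Vw_alt by auto
    have bb: "bdd_below (Vw m v)" unfolding Vw_alt bdd_below_def
      using fw_bounds(1)[OF m v] by blast
    have ba: "bdd_above (Vw m v)" unfolding Vw_alt bdd_above_def
      using fw_bounds(2)[OF m v] by blast
    have "Inf (Vw m v) \<le> r" unfolding r_def
      by (rule cSup_upper[OF _ Ibd]) (use m v in \<open>auto simp: I_def\<close>)
    moreover have "r \<le> Sup (Vw m v)" unfolding r_def
      by (rule cSup_least[OF Ine]) (use key m v in \<open>auto simp: I_def\<close>)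
    ultimately have "r \<in> closure (convex hull (Vw m v))"
      using interval_in_cch Vne bb ba by blast
    then show "r \<in> closure (convex hull {(1 / real m) * (\<Sum>j=1..m. norm (x - v j)) | x. x \<in> (unit_sphere :: 'a set)})"
      unfolding Vw_def .
  qed
  then have "r \<in> rendezvous_set TYPE('a)" unfolding rendezvous_set_def by auto
  then show ?thesis by blast
qed

end
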